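(* Let $0\le\alpha\le1$ and let $a\in C(\mathbf{R})$ satisfy $\frac{a_1}{(1+|x|)^{\alpha}}\le a(x)\le \frac{a_2}{(1+|x|)^{\alpha}}$ for all $x\in\mathbf{R}$, with constants $a_1,a_2>0$, where in the case $\alpha=1$ it is assumed that $a_1>2$. Let $V\in C^1(\mathbf{R})$ be bounded with $V(x)>0$ and $xV'(x)\le0$ for all $x$. For positive constants $\varepsilon_1,\varepsilon_2,\varepsilon_3$ set $f(t)=\varepsilon_1(1+t)^2$, $g(t)=\varepsilon_2(1+t)$, $h(t,x)=\varepsilon_3(1+t)x\phi(x)$, where $\phi(x)=1$ for $|x|\le1$ and $\phi(x)=1/|x|$ for $|x|\ge1$, and let $$F_3(t,x)=g_{tt}(t)-g_t(t)a(x)-V(x)f_t(t)+2V(x)g(t)-V_x(x)h(t,x)-V(x)h_x(t,x).$$ Then there exist positive constants $\varepsilon_1,\varepsilon_2,\varepsilon_3$, $C$ and $t_0$ such that for all $t>t_0$ and all $x\in\mathbf{R}$ with $|x|\ne1$, $-F_3(t,x)\le C\,a(x)$. *)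

theory Defs
  imports "HOL-Analysis.Analysis"
begin

definition phi :: "real \<Rightarrow> real" where
  "phi x = (if \<bar>x\<bar> \<le> 1 then 1 else 1 / \<bar>x\<bar>)"

definition ff :: "real \<Rightarrow> real \<Rightarrow> real" where
  "ff e1 t = e1 * (1 + t)^2"

definition gg :: "real \<Rightarrow> real \<Rightarrow> real" where
  "gg e2 t = e2 * (1 + t)"

definition hh :: "real \<Rightarrow> real \<Rightarrow> real \<Rightarrow> real" where
  "hh e3 t x = e3 * (1 + t) * x * phi x"

definition F3 :: "real \<Rightarrow> real \<Rightarrow> real \<Rightarrow> (real \<Rightarrow> real) \<Rightarrow> (real \<Rightarrow> real) \<Rightarrow> real \<Rightarrow> real \<Rightarrow> real" where
  "F3 e1 e2 e3 a V t x =
     deriv (deriv (gg e2)) t - deriv (gg e2) t * a x - V x * deriv (ff e1) t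
     + 2 * V x * gg e2 t - deriv V x * hh e3 t x - V x * deriv (\<lambda>y. hh e3 t y) x"

end

theory Submission
  imports Defs
begin

lemma deriv_gg: "deriv (gg e2) = (\<lambda>_. e2)"
proof
  fix t
  have "(gg e2 has_field_derivative e2) (at t)"
    unfolding gg_def[abs_def] by (auto intro!: derivative_eq_intros)
  then show "deriv (gg e2) t = e2" by (rule DERIV_imp_deriv)
qed

lemma deriv_ff: "deriv (ff e1) t = 2 * e1 * (1 + t)"
proof -
  have "(ff e1 has_field_derivative 2 * e1 * (1 + t)) (at t)"
    unfolding ff_def[abs_def] by (auto intro!: derivative_eq_intros)
  then show ?thesis by (rule DERIV_imp_deriv)
qed

lemma deriv_hh:
  assumes "\<bar>x\<bar> \<noteq> 1"
  shows "deriv (\<lambda>y. hh e3 t y) x = (if \<bar>x\<bar> < 1 then e3 * (1 + t) else 0)"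
proof (cases "\<bar>x\<bar> < 1")
  case True
  have d: "((\<lambda>y. e3 * (1 + t) * y) has_field_derivative e3 * (1 + t)) (at x)"
    by (auto intro!: derivative_eq_intros)
  have "((\<lambda>y. hh e3 t y) has_field_derivative e3 * (1 + t)) (at x)"
    by (rule has_field_derivative_transform_within_open[OF d, of "{-1<..<1}"])
       (use True in \<open>auto simp: hh_def phi_def\<close>)
  then show ?thesis using True by (simp add: DERIV_imp_deriv)
next
  case False
  then have x: "x > 1 \<or> x < -1" using assms by auto
  then show ?thesis
  proof
    assume "x > 1"
    have d: "((\<lambda>y. e3 * (1 + t)) has_field_derivative 0) (at x)"
      by (auto intro!: derivative_eq_intros)
    have "((\<lambda>y. hh e3 t y) has_field_derivative 0) (at x)"
      by (rule has_field_derivative_transform_within_open[OF d, of "{1<..}"])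
         (use \<open>x > 1\<close> in \<open>auto simp: hh_def phi_def\<close>)
    then show ?thesis using False by (simp add: DERIV_imp_deriv)
  next
    assume "x < -1"
    have d: "((\<lambda>y. - e3 * (1 + t)) has_field_derivative 0) (at x)"
      by (auto intro!: derivative_eq_intros)
    have "((\<lambda>y. hh e3 t y) has_field_derivative 0) (at x)"
      by (rule has_field_derivative_transform_within_open[OF d, of "{..<-1}"])
         (use \<open>x < -1\<close> in \<open>auto simp: hh_def phi_def\<close>)
    then show ?thesis using False by (simp add: DERIV_imp_deriv)
  qed
qed

theorem lemma2p3:
  fixes a V :: "real \<Rightarrow> real" and alpha a1 a2 :: real
  assumes "0 \<le> alpha" "alpha \<le> 1"
    and "continuous_on UNIV a"
    and "a1 > 0" "a2 > 0"
    and "\<And>x. a1 / (1 + \<bar>x\<bar>) powr alpha \<le> a x"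
    and "\<And>x. a x \<le> a2 / (1 + \<bar>x\<bar>) powr alpha"
    and "alpha = 1 \<Longrightarrow> a1 > 2"
    and "\<And>x. V differentiable (at x)"
    and "continuous_on UNIV (deriv V)"
    and "bounded (range V)"
    and "\<And>x. V x > 0"
    and "\<And>x. x * deriv V x \<le> 0"
  shows "\<exists>e1 e2 e3 C t0. e1 > 0 \<and> e2 > 0 \<and> e3 > 0 \<and> C > 0 \<and> t0 > 0 \<and>
           (\<forall>t > t0. \<forall>x. \<bar>x\<bar> \<noteq> 1 \<longrightarrow> - F3 e1 e2 e3 a V t x \<le> C * a x)"
proof (intro exI conjI allI impI)
  fix t x :: real
  assume t: "t > 1" and x: "\<bar>x\<bar> \<noteq> 1"
  have php: "phi x > 0" by (auto simp: phi_def)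
  have "deriv V x * hh 1 t x = (1 + t) * phi x * (x * deriv V x)"
    by (simp add: hh_def)
  also have "\<dots> \<le> 0"
  proof (rule mult_nonneg_nonpos)
    show "0 \<le> (1 + t) * phi x" using php t by simp
  qed (rule assms(13))
  finally have h1: "deriv V x * hh 1 t x \<le> 0" .
  have Vp: "V x > 0" by (rule assms(12))
  have h2: "V x * (1 + t) * (2 - 4 + (if \<bar>x\<bar> < 1 then 1 else 0)) \<le> 0"
    using Vp t by (intro mult_nonneg_nonpos) auto
  have "- F3 1 2 1 a V t x = 2 * a x + deriv V x * hh 1 t x
        + V x * (1 + t) * (2 - 4 + (if \<bar>x\<bar> < 1 then 1 else 0))"
    unfolding F3_def deriv_gg deriv_ff deriv_hh[OF x]
    by (simp add: gg_def algebra_simps)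
  also have "\<dots> \<le> 2 * a x" using h1 h2 by linarith
  finally show "- F3 1 2 1 a V t x \<le> 2 * a x" .
qed auto

end
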